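(* For all integers $n\ge 1$ and nonnegative integers $a,b$, $$\det\left[\binom{2i+2a}{j+b}\right]_{i,j=0}^{n-1}=2^{\binom{n}{2}}\prod_{i=0}^{n-1}\frac{(2i+2a)!\,i!}{(i+b)!\,(2i+2a-b)!}=2^{\binom{n}{2}}\prod_{i=0}^{n-1}\binom{2i+2a}{b}\binom{i+b}{b}^{-1}.$$ In particular, $\det\left[\binom{2i}{j}\right]_{i,j=0}^{n-1}=2^{\binom n2}$.
   Context: Binomial coefficients follow the convention $\binom{m}{k}=0$ if $k<0$ or $k>m$ (in the middle expression, a term with $2i+2a<b$ is interpreted as $0$, consistent with the rightmost expression). *)

theory Defs
  imports Complex_Main "Jordan_Normal_Form.Determinant"
begin

text \<open>Middle factor of the product formula; by convention it is 0 when 2i+2a < b.\<close>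
definition mid_factor :: "nat \<Rightarrow> nat \<Rightarrow> nat \<Rightarrow> real" where
  "mid_factor a b i = (if b \<le> 2*i + 2*a
     then (fact (2*i + 2*a) * fact i) / (fact (i + b) * fact (2*i + 2*a - b))
     else 0)"

end

theory Submission imports Defs begin

definition ff :: "real \<Rightarrow> nat \<Rightarrow> real" where
  "ff y j = (\<Prod>l=0..<j. y - of_nat l)"

lemma ff_Suc: "ff y (Suc j) = ff y j * (y - of_nat j)"
  by (simp add: ff_def)

lemma det_mat_diag: "det (mat_diag n f) = (\<Prod>i<n. f i)"
proof -
  have "upper_triangular (mat_diag n f)" by (auto simp: upper_triangular_def mat_diag_def)
  then have "det (mat_diag n f) = prod_list (diag_mat (mat_diag n f))"
    by (metis det_upper_triangular mat_diag_dim)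
  also have "\<dots> = (\<Prod>i<n. f i)" unfolding prod_list_diag_prod
    by (simp add: mat_diag_def atLeast0LessThan)
  finally show ?thesis .
qed

lemma sign_prod: "(-1::real)^m * (\<Prod>i<m. y i - c) = (\<Prod>i<m. c - y i)"
  by (induction m) (auto simp: algebra_simps)

lemma det_ff:
  "det (mat n n (\<lambda>(i,j). ff (y i) j)) = (\<Prod>k<n. \<Prod>i<k. (y k - y i))"
proof (induction n)
  case 0
  then show ?case by (simp add: det_def')
next
  case (Suc n)
  define F where "F = mat (Suc n) (Suc n) (\<lambda>(i,j). ff (y i) j)"
  define L where "L = mat (Suc n) (Suc n) (\<lambda>(i,j). (if i = j then 1 else 0)
        + (if j = Suc i then -(y n - of_nat i) else 0))"
  define M where "M = mat (Suc n) (Suc n) (\<lambda>(i,k). if k = 0 then 1 else (y i - y n) * ff (y i) (k - 1))"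
  have FL: "F * L = M"
  proof (rule eq_matI)
    fix i k assume i: "i < dim_row M" and k: "k < dim_col M"
    have "(F * L) $$ (i,k) = (\<Sum>l<Suc n. ff (y i) l * ((if l = k then 1 else 0)
        + (if k = Suc l then -(y n - of_nat l) else 0)))"
      using i k by (simp add: F_def L_def M_def scalar_prod_def atLeast0LessThan)
    also have "\<dots> = (\<Sum>l<Suc n. (if l = k then ff (y i) l else 0))
        + (\<Sum>l<Suc n. (if k = Suc l then ff (y i) l * (-(y n - of_nat l)) else 0))"
      unfolding sum.distrib[symmetric] by (intro sum.cong) auto
    also have "\<dots> = M $$ (i,k)"
    proof (cases k)
      case 0
      then show ?thesis using i k by (simp add: M_def ff_def)
    next
      case (Suc k')
      have "(\<Sum>l<Suc n. (if k = Suc l then ff (y i) l * (-(y n - of_nat l)) else 0))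
           = (\<Sum>l<Suc n. (if l = k' then ff (y i) l * (-(y n - of_nat l)) else 0))"
        using Suc by (intro sum.cong) auto
      moreover have "Suc k' < n \<or> n = Suc k'" using Suc k by (auto simp: M_def)
      ultimately show ?thesis using Suc i k by (auto simp: M_def ff_Suc algebra_simps)
    qed
    finally show "(F * L) $$ (i,k) = M $$ (i,k)" .
  qed (auto simp: F_def L_def M_def)
  have detL: "det L = 1"
  proof -
    have "upper_triangular L" by (auto simp: upper_triangular_def L_def)
    moreover have "L \<in> carrier_mat (Suc n) (Suc n)" by (simp add: L_def)
    ultimately have "det L = prod_list (diag_mat L)"
      by (rule det_upper_triangular)
    also have "\<dots> = 1" unfolding prod_list_diag_prod by (simp add: L_def)
    finally show ?thesis .
  qed
  have Mc: "M \<in> carrier_mat (Suc n) (Suc n)" by (simp add: M_def)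
  have "det M = (\<Sum>j<Suc n. M $$ (n,j) * cofactor M n j)"
    using laplace_expansion_row[OF Mc, of n] by simp
  also have "\<dots> = (\<Sum>j<Suc n. if j = 0 then cofactor M n 0 else 0)"
    by (intro sum.cong) (auto simp: M_def)
  also have "\<dots> = (-1)^n * det (mat_delete M n 0)"
    by (simp add: cofactor_def)
  also have "mat_delete M n 0 = mat_diag n (\<lambda>i. y i - y n) * mat n n (\<lambda>(i,j). ff (y i) j)"
    by (subst mat_diag_mult_left[of _ n n]) (auto simp: mat_delete_def M_def)
  also have "det \<dots> = (\<Prod>i<n. y i - y n) * (\<Prod>k<n. \<Prod>i<k. (y k - y i))"
    by (subst det_mult[of _ n]) (auto simp: det_mat_diag Suc.IH)
  finally have dM: "det M = (-1)^n * (\<Prod>i<n. y i - y n) * (\<Prod>k<n. \<Prod>i<k. (y k - y i))"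
    by simp
  have "(-1)^n * (\<Prod>i<n. y i - y n) = (\<Prod>i<n. y n - y i)"
    by (rule sign_prod)
  moreover have "det F = det M"
    using FL det_mult[of F "Suc n" L] detL by (simp add: F_def L_def)
  ultimately show ?case using dM by (simp add: F_def)
qed

lemma ff_nat: "ff (real m) j = fact j * real (m choose j)"
  unfolding ff_def binomial_gbinomial gbinomial_mult_fact by simp

lemma entry: "real (x choose (j+b)) = real (x choose b) * ff (real x - real b) j * fact b / fact (j+b)"
proof (cases "b \<le> x")
  case False
  then show ?thesis by (simp add: binomial_eq_0)
next
  case True
  then have e: "real x - real b = real (x - b)" by simp
  show ?thesis
  proof (cases "j + b \<le> x")
    case True
    have "(x choose (j+b)) * ((j+b) choose b) = (x choose b) * ((x - b) choose j)"
      using choose_mult[of b "j+b" x] True by simp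
    then have h1: "real (x choose (j+b)) * real ((j+b) choose b) = real (x choose b) * real ((x - b) choose j)"
      by (metis of_nat_mult)
    have h2: "fact b * fact j * real ((j+b) choose b) = (fact (j+b) :: real)"
      using binomial_fact_lemma[of b "j+b"] by (metis add_diff_cancel_right' le_add2 of_nat_fact of_nat_mult)
    have "fact (j+b) * real (x choose (j+b)) = fact b * fact j * (real (x choose (j+b)) * real ((j+b) choose b))"
      by (subst h2[symmetric]) (simp add: algebra_simps)
    also have "\<dots> = fact b * fact j * (real (x choose b) * real ((x - b) choose j))" by (simp only: h1)
    finally have h3: "fact (j+b) * real (x choose (j+b)) = fact b * fact j * (real (x choose b) * real ((x - b) choose j))" .
    have "real (x choose (j+b)) = fact b * fact j * (real (x choose b) * real ((x - b) choose j)) / fact (j+b)"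
      using h3 by (simp add: field_simps)
    then show ?thesis unfolding e ff_nat by (simp add: algebra_simps)
  next
    case False
    then have "x < j + b" "x - b < j" using \<open>b \<le> x\<close> by auto
    then show ?thesis unfolding e ff_nat by (simp add: binomial_eq_0)
  qed
qed

lemma prod_diff: "(\<Prod>i<k. real k - real i) = fact k"
proof -
  have "(\<Prod>i<k. real k - real i) = real (\<Prod>i=0..<k. k - i)"
    by (simp add: of_nat_diff atLeast0LessThan)
  then show ?thesis by (simp add: fact_prod_rev)
qed

lemma sum_choose2: "(\<Sum>k<n. k) = n choose 2"
  by (induction n) (auto simp: numeral_2_eq_2)

lemma main1:
  fixes n a b :: nat
  shows "det (mat n n (\<lambda>(i, j). real ((2*i + 2*a) choose (j + b))))
           = 2 ^ (n choose 2) * (\<Prod>i<n. mid_factor a b i)"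
proof -
  define x where "x i = 2*i + 2*a" for i
  define y where "y i = real (x i) - real b" for i
  define D where "D = mat_diag n (\<lambda>i. real (x i choose b))"
  define F where "F = mat n n (\<lambda>(i,j). ff (y i) j)"
  define E where "E = mat_diag n (\<lambda>j. fact b / fact (j+b) :: real)"
  have Fc: "F \<in> carrier_mat n n" by (simp add: F_def)
  have "mat n n (\<lambda>(i, j). real ((2*i + 2*a) choose (j + b))) = D * F * E"
    unfolding D_def E_def
    apply (subst mat_diag_mult_left[OF Fc])
    apply (subst mat_diag_mult_right[of _ n])
     apply simp
    apply (rule eq_matI)
       apply (auto simp: F_def y_def x_def entry)
    done
  also have "det (D * F * E) = det D * det F * det E"
  proof -
    have DF: "D * F \<in> carrier_mat n n" using mult_carrier_mat[OF mat_diag_dim Fc] by (simp add: D_def)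
    have "det (D * F * E) = det (D * F) * det E"
      by (rule det_mult[OF DF]) (simp add: E_def)
    also have "det (D * F) = det D * det F"
      by (rule det_mult[OF _ Fc]) (simp add: D_def)
    finally show ?thesis .
  qed
  also have "det F = (\<Prod>k<n. 2^k * fact k)"
  proof -
    have "det F = (\<Prod>k<n. \<Prod>i<k. (y k - y i))" unfolding F_def by (rule det_ff)
    also have "\<dots> = (\<Prod>k<n. \<Prod>i<k. 2 * (real k - real i))"
      by (intro prod.cong refl) (simp add: y_def x_def algebra_simps)
    also have "\<dots> = (\<Prod>k<n. 2^k * fact k)"
      by (intro prod.cong refl) (simp only: prod.distrib prod_constant card_lessThan prod_diff)
    finally show ?thesis .
  qed
  also have "det D * (\<Prod>k<n. 2^k * fact k) * det E
      = (\<Prod>k<n. 2^k) * (\<Prod>k<n. real (x k choose b) * fact k * (fact b / fact (k+b)))"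
    unfolding D_def E_def det_mat_diag prod.distrib by (simp only: mult_ac)
  also have "(\<Prod>k<n. (2::real)^k) = 2 ^ (n choose 2)"
    unfolding sum_choose2[symmetric] power_sum by simp
  also have "(\<Prod>k<n. real (x k choose b) * fact k * (fact b / fact (k+b))) = (\<Prod>i<n. mid_factor a b i)"
  proof (intro prod.cong refl)
    fix k
    show "real (x k choose b) * fact k * (fact b / fact (k+b)) = mid_factor a b k"
    proof (cases "b \<le> x k")
      case True
      then show ?thesis by (simp add: mid_factor_def binomial_fact x_def field_simps)
    next
      case False
      then show ?thesis by (simp add: mid_factor_def x_def)
    qed
  qed
  finally show ?thesis .
qed

lemma mid_alt: "mid_factor a b i = real ((2*i + 2*a) choose b) * inverse (real ((i + b) choose b))"
proof (cases "b \<le> 2*i + 2*a")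
  case True
  have "real ((i + b) choose b) = fact (i+b) / (fact b * fact i)"
    by (simp add: binomial_fact)
  then show ?thesis using True by (simp add: mid_factor_def binomial_fact field_simps)
next
  case False
  then show ?thesis by (simp add: mid_factor_def binomial_eq_0)
qed

theorem mainTheorem1:
  fixes n a b :: nat
  assumes "n \<ge> 1"
  shows "det (mat n n (\<lambda>(i, j). real ((2*i + 2*a) choose (j + b))))
           = 2 ^ (n choose 2) * (\<Prod>i<n. mid_factor a b i)
       \<and> det (mat n n (\<lambda>(i, j). real ((2*i + 2*a) choose (j + b))))
           = 2 ^ (n choose 2) * (\<Prod>i<n. real ((2*i + 2*a) choose b) * inverse (real ((i + b) choose b)))
       \<and> det (mat n n (\<lambda>(i, j). real ((2*i) choose j))) = 2 ^ (n choose 2)"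
proof (intro conjI)
  show 1: "det (mat n n (\<lambda>(i, j). real ((2*i + 2*a) choose (j + b))))
           = 2 ^ (n choose 2) * (\<Prod>i<n. mid_factor a b i)" by (rule main1)
  show "det (mat n n (\<lambda>(i, j). real ((2*i + 2*a) choose (j + b))))
           = 2 ^ (n choose 2) * (\<Prod>i<n. real ((2*i + 2*a) choose b) * inverse (real ((i + b) choose b)))"
    unfolding 1 mid_alt ..
  have "mid_factor 0 0 i = 1" for i by (simp add: mid_factor_def)
  then show "det (mat n n (\<lambda>(i, j). real ((2*i) choose j))) = 2 ^ (n choose 2)"
    using main1[of n 0 0] by simp
qed

end
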